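(* Let $Q$ be a Moufang loop and $X$ a $2$-divisible normal subloop of $Q$ that is a commutative group. Then every inner mapping of $Q$ restricts to an automorphism of $X$.
   Context: A loop is a magma with identity $1$ in which the left translations $L_x(y)=xy$ and right translations $R_x(y)=yx$ are bijections; it is Moufang if it satisfies $xy\cdot zx=(x\cdot yz)x$. A subloop is normal if it is the kernel of a homomorphism. The inner mapping group $\mathrm{Inn}(Q)$ is the stabilizer of $1$ in the permutation group generated by all $L_x,R_x$; its elements are inner mappings. $X$ is $2$-divisible if $x\mapsto x^2$ is surjective on $X$. *)

theory Defs
  imports "HOL-Library.FuncSet"
begin

definition loop :: "'a set \<Rightarrow> ('a \<Rightarrow> 'a \<Rightarrow> 'a) \<Rightarrow> 'a \<Rightarrow> bool" where
  "loop Q m e \<longleftrightarrow> e \<in> Q \<and> (\<forall>x\<in>Q. \<forall>y\<in>Q. m x y \<in> Q)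
     \<and> (\<forall>x\<in>Q. m e x = x \<and> m x e = x)
     \<and> (\<forall>x\<in>Q. bij_betw (\<lambda>y. m x y) Q Q \<and> bij_betw (\<lambda>y. m y x) Q Q)"

definition moufang_loop :: "'a set \<Rightarrow> ('a \<Rightarrow> 'a \<Rightarrow> 'a) \<Rightarrow> 'a \<Rightarrow> bool" where
  "moufang_loop Q m e \<longleftrightarrow> loop Q m e \<and>
     (\<forall>x\<in>Q. \<forall>y\<in>Q. \<forall>z\<in>Q. m (m x y) (m z x) = m (m x (m y z)) x)"

definition loop_hom :: "'a set \<Rightarrow> ('a \<Rightarrow> 'a \<Rightarrow> 'a) \<Rightarrow> 'b set \<Rightarrow> ('b \<Rightarrow> 'b \<Rightarrow> 'b) \<Rightarrow> ('a \<Rightarrow> 'b) \<Rightarrow> bool" where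
  "loop_hom Q m Q' m' h \<longleftrightarrow> h \<in> Q \<rightarrow> Q' \<and> (\<forall>x\<in>Q. \<forall>y\<in>Q. h (m x y) = m' (h x) (h y))"

definition hom_kernel :: "'a set \<Rightarrow> ('a \<Rightarrow> 'b) \<Rightarrow> 'b \<Rightarrow> 'a set" where
  "hom_kernel Q h e' = {x\<in>Q. h x = e'}"

definition Ltr :: "'a set \<Rightarrow> ('a \<Rightarrow> 'a \<Rightarrow> 'a) \<Rightarrow> 'a \<Rightarrow> 'a \<Rightarrow> 'a" where
  "Ltr Q m x = (\<lambda>y\<in>Q. m x y)"

definition Rtr :: "'a set \<Rightarrow> ('a \<Rightarrow> 'a \<Rightarrow> 'a) \<Rightarrow> 'a \<Rightarrow> 'a \<Rightarrow> 'a" where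
  "Rtr Q m x = (\<lambda>y\<in>Q. m y x)"

inductive_set mult_group :: "'a set \<Rightarrow> ('a \<Rightarrow> 'a \<Rightarrow> 'a) \<Rightarrow> ('a \<Rightarrow> 'a) set"
  for Q m where
  ident: "(\<lambda>y\<in>Q. y) \<in> mult_group Q m"
| left: "\<lbrakk>f \<in> mult_group Q m; x \<in> Q\<rbrakk> \<Longrightarrow> compose Q (Ltr Q m x) f \<in> mult_group Q m"
| left_inv: "\<lbrakk>f \<in> mult_group Q m; x \<in> Q\<rbrakk> \<Longrightarrow>
     compose Q (restrict (inv_into Q (Ltr Q m x)) Q) f \<in> mult_group Q m"
| right: "\<lbrakk>f \<in> mult_group Q m; x \<in> Q\<rbrakk> \<Longrightarrow> compose Q (Rtr Q m x) f \<in> mult_group Q m"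
| right_inv: "\<lbrakk>f \<in> mult_group Q m; x \<in> Q\<rbrakk> \<Longrightarrow>
     compose Q (restrict (inv_into Q (Rtr Q m x)) Q) f \<in> mult_group Q m"

definition inner_mapping_group :: "'a set \<Rightarrow> ('a \<Rightarrow> 'a \<Rightarrow> 'a) \<Rightarrow> 'a \<Rightarrow> ('a \<Rightarrow> 'a) set" where
  "inner_mapping_group Q m e = {f \<in> mult_group Q m. f e = e}"

definition commutative_group_on :: "'a set \<Rightarrow> ('a \<Rightarrow> 'a \<Rightarrow> 'a) \<Rightarrow> bool" where
  "commutative_group_on X m \<longleftrightarrow>
     (\<forall>x\<in>X. \<forall>y\<in>X. m x y \<in> X) \<and>
     (\<forall>x\<in>X. \<forall>y\<in>X. \<forall>z\<in>X. m (m x y) z = m x (m y z)) \<and>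
     (\<forall>x\<in>X. \<forall>y\<in>X. m x y = m y x) \<and>
     (\<exists>u\<in>X. (\<forall>x\<in>X. m u x = x \<and> m x u = x) \<and> (\<forall>x\<in>X. \<exists>y\<in>X. m x y = u \<and> m y x = u))"

definition two_divisible :: "'a set \<Rightarrow> ('a \<Rightarrow> 'a \<Rightarrow> 'a) \<Rightarrow> bool" where
  "two_divisible X m \<longleftrightarrow> (\<forall>x\<in>X. \<exists>y\<in>X. m y y = x)"

definition automorphism_on :: "'a set \<Rightarrow> ('a \<Rightarrow> 'a \<Rightarrow> 'a) \<Rightarrow> ('a \<Rightarrow> 'a) \<Rightarrow> bool" where
  "automorphism_on X m f \<longleftrightarrow> bij_betw f X X \<and> (\<forall>x\<in>X. \<forall>y\<in>X. f (m x y) = m (f x) (f y))"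

end

theory Submission
  imports Defs
begin

locale mloop =
  fixes Q :: "'a set" and m :: "'a \<Rightarrow> 'a \<Rightarrow> 'a" and e :: 'a
  assumes mf: "moufang_loop Q m e"
begin

lemma lp: "loop Q m e" using mf unfolding moufang_loop_def by blast

lemma closed[simp]: "x \<in> Q \<Longrightarrow> y \<in> Q \<Longrightarrow> m x y \<in> Q"
  using lp unfolding loop_def by blast

lemma unit[simp]: "e \<in> Q" using lp unfolding loop_def by blast

lemma lid[simp]: "x \<in> Q \<Longrightarrow> m e x = x" using lp unfolding loop_def by blast
lemma rid[simp]: "x \<in> Q \<Longrightarrow> m x e = x" using lp unfolding loop_def by blast

lemma mid: "x \<in> Q \<Longrightarrow> y \<in> Q \<Longrightarrow> z \<in> Q \<Longrightarrow>
   m (m x y) (m z x) = m (m x (m y z)) x"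
  using mf unfolding moufang_loop_def by blast

lemma lbij: "x \<in> Q \<Longrightarrow> bij_betw (\<lambda>y. m x y) Q Q" using lp unfolding loop_def by blast
lemma rbij: "x \<in> Q \<Longrightarrow> bij_betw (\<lambda>y. m y x) Q Q" using lp unfolding loop_def by blast

lemma lcancel: "x \<in> Q \<Longrightarrow> y \<in> Q \<Longrightarrow> z \<in> Q \<Longrightarrow> m x y = m x z \<Longrightarrow> y = z"
  using lbij[of x] unfolding bij_betw_def inj_on_def by blast
lemma rcancel: "x \<in> Q \<Longrightarrow> y \<in> Q \<Longrightarrow> z \<in> Q \<Longrightarrow> m y x = m z x \<Longrightarrow> y = z"
  using rbij[of x] unfolding bij_betw_def inj_on_def by blast

lemma rdiv: "x \<in> Q \<Longrightarrow> b \<in> Q \<Longrightarrow> \<exists>y\<in>Q. m x y = b"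
  using lbij[of x] unfolding bij_betw_def by (metis image_iff)

definition iv :: "'a \<Rightarrow> 'a" where "iv x = (SOME y. y \<in> Q \<and> m x y = e)"

lemma iv_prop: "x \<in> Q \<Longrightarrow> iv x \<in> Q \<and> m x (iv x) = e"
  unfolding iv_def by (rule someI_ex) (use rdiv[of x e] in auto)

lemma iv_in[simp]: "x \<in> Q \<Longrightarrow> iv x \<in> Q" using iv_prop by blast
lemma r_inv[simp]: "x \<in> Q \<Longrightarrow> m x (iv x) = e" using iv_prop by blast

lemma flex: "x \<in> Q \<Longrightarrow> z \<in> Q \<Longrightarrow> m x (m z x) = m (m x z) x"
  using mid[of x e z] by simp

lemma lip1[simp]: "x \<in> Q \<Longrightarrow> z \<in> Q \<Longrightarrow> m x (m (iv x) z) = z"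
proof -
  assume a: "x \<in> Q" "z \<in> Q"
  have "m (m x (iv x)) (m z x) = m (m x (m (iv x) z)) x" using mid[of x "iv x" z] a by simp
  hence "m z x = m (m x (m (iv x) z)) x" using a by simp
  thus ?thesis using rcancel[of x z "m x (m (iv x) z)"] a by simp
qed

lemma lip[simp]: "x \<in> Q \<Longrightarrow> z \<in> Q \<Longrightarrow> m (iv x) (m x z) = z"
  using lcancel[of x "m (iv x) (m x z)" z] lip1 by simp

lemma l_inv[simp]: "x \<in> Q \<Longrightarrow> m (iv x) x = e"
  using lip[of x e] by simp

lemma rip1[simp]: "x \<in> Q \<Longrightarrow> y \<in> Q \<Longrightarrow> m (m y (iv x)) x = y"
proof -
  assume a: "x \<in> Q" "y \<in> Q"
  have "m (m x y) (m (iv x) x) = m (m x (m y (iv x))) x" using mid[of x y "iv x"] a by simp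
  also have "\<dots> = m x (m (m y (iv x)) x)" using flex[of x "m y (iv x)"] a by simp
  finally have "m x y = m x (m (m y (iv x)) x)" using a by simp
  thus ?thesis using lcancel[of x y "m (m y (iv x)) x"] a by simp
qed

lemma rip[simp]: "x \<in> Q \<Longrightarrow> y \<in> Q \<Longrightarrow> m (m y x) (iv x) = y"
  using rcancel[of x "m (m y x) (iv x)" y] rip1 by simp

lemma ivv[simp]: "x \<in> Q \<Longrightarrow> iv (iv x) = x"
  using lcancel[of "iv x" "iv (iv x)" x] by simp

lemma aaip: "x \<in> Q \<Longrightarrow> y \<in> Q \<Longrightarrow> iv (m x y) = m (iv y) (iv x)"
proof -
  assume a: "x \<in> Q" "y \<in> Q"
  define c where "c = m x y"
  have c: "c \<in> Q" using a c_def by simp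
  have "x = m c (iv y)" using a c_def by simp
  hence "m (iv c) x = iv y" using a c by simp
  hence "m (m (iv c) x) (iv x) = m (iv y) (iv x)" by simp
  thus ?thesis using a c c_def by simp
qed

lemma rmouf: "u \<in> Q \<Longrightarrow> x \<in> Q \<Longrightarrow> w \<in> Q \<Longrightarrow>
  m (m (m u x) w) x = m u (m (m x w) x)"
proof -
  assume a: "u \<in> Q" "x \<in> Q" "w \<in> Q"
  define v where "v = m u x"
  have v: "v \<in> Q" using a v_def by simp
  have "m (m x (iv v)) (m (m (iv (iv v)) w) x) = m (m x (m (iv v) (m (iv (iv v)) w))) x"
    using mid[of x "iv v" "m (iv (iv v)) w"] a v by simp
  hence 1: "m (m x (iv v)) (m (m v w) x) = m (m x w) x" using a v by simp
  have "m (m v w) x = m (iv (m x (iv v))) (m (m x (iv v)) (m (m v w) x))"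
    using a v by simp
  also have "\<dots> = m (m v (iv x)) (m (m x w) x)" using 1 aaip[of x "iv v"] a v by simp
  also have "m v (iv x) = u" using a v_def by simp
  finally show ?thesis using v_def by simp
qed

lemma lmouf: "x \<in> Q \<Longrightarrow> w \<in> Q \<Longrightarrow> q \<in> Q \<Longrightarrow>
  m x (m w (m x q)) = m (m (m x w) x) q"
proof -
  assume a: "x \<in> Q" "w \<in> Q" "q \<in> Q"
  define z where "z = iv (m x q)"
  have z: "z \<in> Q" using a z_def by simp
  have "m (m x (m w (m x q))) (m z x) = m (m x (m (m w (m x q)) z)) x"
    using mid[of x "m w (m x q)" z] a z by simp
  hence 1: "m (m x (m w (m x q))) (m z x) = m (m x w) x" using a z_def by simp
  have "m x (m w (m x q)) = m (m (m x (m w (m x q))) (m z x)) (iv (m z x))"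
    using a z by simp
  also have "\<dots> = m (m (m x w) x) (m (iv x) (iv z))" using 1 aaip[of z x] a z by simp
  also have "m (iv x) (iv z) = q" using a z_def by simp
  finally show ?thesis .
qed


lemma Ltr_inv: "a \<in> Q \<Longrightarrow> b \<in> Q \<Longrightarrow> inv_into Q (Ltr Q m a) b = m (iv a) b"
proof -
  assume a: "a \<in> Q" "b \<in> Q"
  have "inj_on (\<lambda>y. m a y) Q" using lbij[OF a(1)] bij_betw_def by blast
  hence "inj_on (Ltr Q m a) Q" unfolding Ltr_def by (simp add: inj_on_def)
  thus ?thesis by (rule inv_into_f_eq) (use a in \<open>auto simp: Ltr_def\<close>)
qed

lemma Rtr_inv: "a \<in> Q \<Longrightarrow> b \<in> Q \<Longrightarrow> inv_into Q (Rtr Q m a) b = m b (iv a)"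
proof -
  assume a: "a \<in> Q" "b \<in> Q"
  have "inj_on (\<lambda>y. m y a) Q" using rbij[OF a(1)] bij_betw_def by blast
  hence "inj_on (Rtr Q m a) Q" unfolding Rtr_def by (simp add: inj_on_def)
  thus ?thesis by (rule inv_into_f_eq) (use a in \<open>auto simp: Rtr_def\<close>)
qed

lemma mg:
  assumes "f \<in> mult_group Q m" "P (\<lambda>y\<in>Q. y)"
    and L: "\<And>g a. P g \<Longrightarrow> g \<in> Q \<rightarrow> Q \<Longrightarrow> a \<in> Q \<Longrightarrow> P (\<lambda>x\<in>Q. m a (g x))"
    and R: "\<And>g a. P g \<Longrightarrow> g \<in> Q \<rightarrow> Q \<Longrightarrow> a \<in> Q \<Longrightarrow> P (\<lambda>x\<in>Q. m (g x) a)"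
  shows "P f \<and> f \<in> Q \<rightarrow> Q"
  using assms(1)
proof induct
  case ident
  then show ?case using assms(2) by (simp add: restrict_def)
next
  case (left f x)
  have eq: "compose Q (Ltr Q m x) f = (\<lambda>y\<in>Q. m x (f y))"
    using left by (auto simp: compose_def Ltr_def fun_eq_iff)
  show ?case unfolding eq using left L[of f x] by (intro conjI) (use iv_in in blast, auto simp: Pi_iff)
next
  case (left_inv f x)
  have eq: "compose Q (restrict (inv_into Q (Ltr Q m x)) Q) f = (\<lambda>y\<in>Q. m (iv x) (f y))"
    using left_inv by (auto simp: compose_def Ltr_inv fun_eq_iff)
  show ?case unfolding eq using left_inv L[of f "iv x"] by (intro conjI) (use iv_in in blast, auto simp: Pi_iff)
next
  case (right f x)
  have eq: "compose Q (Rtr Q m x) f = (\<lambda>y\<in>Q. m (f y) x)"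
    using right by (auto simp: compose_def Rtr_def fun_eq_iff)
  show ?case unfolding eq using right R[of f x] by (intro conjI) (use iv_in in blast, auto simp: Pi_iff)
next
  case (right_inv f x)
  have eq: "compose Q (restrict (inv_into Q (Rtr Q m x)) Q) f = (\<lambda>y\<in>Q. m (f y) (iv x))"
    using right_inv by (auto simp: compose_def Rtr_inv fun_eq_iff)
  show ?case unfolding eq using right_inv R[of f "iv x"] by (intro conjI) (use iv_in in blast, auto simp: Pi_iff)
qed

lemma mg_bij: "f \<in> mult_group Q m \<Longrightarrow> bij_betw f Q Q"
proof -
  assume f: "f \<in> mult_group Q m"
  show ?thesis
  proof (rule conjunct1[OF mg[OF f, where P="\<lambda>g. bij_betw g Q Q"]])
    show "bij_betw (\<lambda>y\<in>Q. y) Q Q" by (simp add: bij_betw_def inj_on_def)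
  next
    fix g a assume g: "bij_betw g Q Q" and a: "a \<in> Q"
    have "bij_betw ((\<lambda>y. m a y) \<circ> g) Q Q" using g lbij[OF a] by (rule bij_betw_trans)
    thus "bij_betw (\<lambda>x\<in>Q. m a (g x)) Q Q" by (rule bij_betw_cong[THEN iffD1, rotated]) auto
  next
    fix g a assume g: "bij_betw g Q Q" and a: "a \<in> Q"
    have "bij_betw ((\<lambda>y. m y a) \<circ> g) Q Q" using g rbij[OF a] by (rule bij_betw_trans)
    thus "bij_betw (\<lambda>x\<in>Q. m (g x) a) Q Q" by (rule bij_betw_cong[THEN iffD1, rotated]) auto
  qed
qed

lemma mg_atp: "f \<in> mult_group Q m \<Longrightarrow>
  \<exists>\<beta> \<gamma>. (\<forall>y\<in>Q. \<beta> y \<in> Q) \<and> (\<forall>x\<in>Q. \<forall>y\<in>Q. m (f x) (\<beta> y) = \<gamma> (m x y))"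
proof -
  assume f: "f \<in> mult_group Q m"
  show ?thesis
  proof (rule conjunct1[OF mg[OF f]])
    show "\<exists>\<beta> \<gamma>. (\<forall>y\<in>Q. \<beta> y \<in> Q) \<and> (\<forall>x\<in>Q. \<forall>y\<in>Q. m ((\<lambda>y\<in>Q. y) x) (\<beta> y) = \<gamma> (m x y))"
      by (rule exI[of _ "\<lambda>y. y"], rule exI[of _ "\<lambda>y. y"]) auto
  next
    fix g a assume "\<exists>\<beta> \<gamma>. (\<forall>y\<in>Q. \<beta> y \<in> Q) \<and> (\<forall>x\<in>Q. \<forall>y\<in>Q. m (g x) (\<beta> y) = \<gamma> (m x y))"
      and g: "g \<in> Q \<rightarrow> Q" and a: "a \<in> Q"
    then obtain \<beta> \<gamma> where b: "\<forall>y\<in>Q. \<beta> y \<in> Q" and bg: "\<forall>x\<in>Q. \<forall>y\<in>Q. m (g x) (\<beta> y) = \<gamma> (m x y)"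
      by blast
    show "\<exists>\<beta> \<gamma>. (\<forall>y\<in>Q. \<beta> y \<in> Q) \<and> (\<forall>x\<in>Q. \<forall>y\<in>Q. m ((\<lambda>x\<in>Q. m a (g x)) x) (\<beta> y) = \<gamma> (m x y))"
    proof (intro exI conjI ballI)
      fix y assume "y \<in> Q" thus "m (\<beta> y) a \<in> Q" using a b by simp
    next
      fix x y assume xy: "x \<in> Q" "y \<in> Q"
      have "m ((\<lambda>x\<in>Q. m a (g x)) x) (m (\<beta> y) a) = m (m a (g x)) (m (\<beta> y) a)" using xy by simp
      also have "\<dots> = m (m a (m (g x) (\<beta> y))) a" using mid[of a "g x" "\<beta> y"] a b g xy by auto
      also have "\<dots> = m (m a (\<gamma> (m x y))) a" using bg xy by simp
      finally show "m ((\<lambda>x\<in>Q. m a (g x)) x) (m (\<beta> y) a) = (\<lambda>w. m (m a (\<gamma> w)) a) (m x y)" by simp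
    qed
  next
    fix g a assume "\<exists>\<beta> \<gamma>. (\<forall>y\<in>Q. \<beta> y \<in> Q) \<and> (\<forall>x\<in>Q. \<forall>y\<in>Q. m (g x) (\<beta> y) = \<gamma> (m x y))"
      and g: "g \<in> Q \<rightarrow> Q" and a: "a \<in> Q"
    then obtain \<beta> \<gamma> where b: "\<forall>y\<in>Q. \<beta> y \<in> Q" and bg: "\<forall>x\<in>Q. \<forall>y\<in>Q. m (g x) (\<beta> y) = \<gamma> (m x y)"
      by blast
    show "\<exists>\<beta> \<gamma>. (\<forall>y\<in>Q. \<beta> y \<in> Q) \<and> (\<forall>x\<in>Q. \<forall>y\<in>Q. m ((\<lambda>x\<in>Q. m (g x) a) x) (\<beta> y) = \<gamma> (m x y))"
    proof (intro exI conjI ballI)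
      fix y assume "y \<in> Q" thus "m (m (iv a) (\<beta> y)) (iv a) \<in> Q" using a b by simp
    next
      fix x y assume xy: "x \<in> Q" "y \<in> Q"
      have gx: "g x \<in> Q" using g xy by auto
      have by': "\<beta> y \<in> Q" using b xy by auto
      have "m ((\<lambda>x\<in>Q. m (g x) a) x) (m (m (iv a) (\<beta> y)) (iv a))
          = m (m (g x) a) (m (m (iv a) (\<beta> y)) (iv a))" using xy by simp
      also have "\<dots> = m (m (m (m (g x) a) (iv a)) (\<beta> y)) (iv a)"
        using rmouf[of "m (g x) a" "iv a" "\<beta> y"] a gx by' by simp
      also have "\<dots> = m (\<gamma> (m x y)) (iv a)" using bg xy a gx by simp
      finally show "m ((\<lambda>x\<in>Q. m (g x) a) x) (m (m (iv a) (\<beta> y)) (iv a)) = (\<lambda>w. m (\<gamma> w) (iv a)) (m x y)"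
        by simp
    qed
  qed
qed


lemma mg_hom:
  assumes f: "f \<in> mult_group Q m" and lQ: "loop Q' m' e'" and hom: "loop_hom Q m Q' m' h"
  shows "\<forall>x\<in>Q. \<forall>y\<in>Q. (h (f x) = h (f y)) = (h x = h y)"
proof -
  have hQ: "\<And>x. x \<in> Q \<Longrightarrow> h x \<in> Q'" using hom unfolding loop_hom_def by blast
  have hm: "\<And>x y. x \<in> Q \<Longrightarrow> y \<in> Q \<Longrightarrow> h (m x y) = m' (h x) (h y)"
    using hom unfolding loop_hom_def by blast
  have lc: "\<And>a u v. a \<in> Q' \<Longrightarrow> u \<in> Q' \<Longrightarrow> v \<in> Q' \<Longrightarrow> (m' a u = m' a v) = (u = v)"
    using lQ unfolding loop_def bij_betw_def inj_on_def by blast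
  have rc: "\<And>a u v. a \<in> Q' \<Longrightarrow> u \<in> Q' \<Longrightarrow> v \<in> Q' \<Longrightarrow> (m' u a = m' v a) = (u = v)"
    using lQ unfolding loop_def bij_betw_def inj_on_def by blast
  show ?thesis
  proof (rule conjunct1[OF mg[OF f]])
    show "\<forall>x\<in>Q. \<forall>y\<in>Q. (h ((\<lambda>y\<in>Q. y) x) = h ((\<lambda>y\<in>Q. y) y)) = (h x = h y)" by simp
  next
    fix g a assume IH: "\<forall>x\<in>Q. \<forall>y\<in>Q. (h (g x) = h (g y)) = (h x = h y)"
      and g: "g \<in> Q \<rightarrow> Q" and a: "a \<in> Q"
    show "\<forall>x\<in>Q. \<forall>y\<in>Q. (h ((\<lambda>x\<in>Q. m a (g x)) x) = h ((\<lambda>x\<in>Q. m a (g x)) y)) = (h x = h y)"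
    proof (intro ballI)
      fix x y assume xy: "x \<in> Q" "y \<in> Q"
      have gx: "g x \<in> Q" "g y \<in> Q" using g xy by auto
      show "(h ((\<lambda>x\<in>Q. m a (g x)) x) = h ((\<lambda>x\<in>Q. m a (g x)) y)) = (h x = h y)"
        using xy gx a IH by (simp add: hm lc hQ)
    qed
  next
    fix g a assume IH: "\<forall>x\<in>Q. \<forall>y\<in>Q. (h (g x) = h (g y)) = (h x = h y)"
      and g: "g \<in> Q \<rightarrow> Q" and a: "a \<in> Q"
    show "\<forall>x\<in>Q. \<forall>y\<in>Q. (h ((\<lambda>x\<in>Q. m (g x) a) x) = h ((\<lambda>x\<in>Q. m (g x) a) y)) = (h x = h y)"
    proof (intro ballI)
      fix x y assume xy: "x \<in> Q" "y \<in> Q"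
      have gx: "g x \<in> Q" "g y \<in> Q" using g xy by auto
      show "(h ((\<lambda>x\<in>Q. m (g x) a) x) = h ((\<lambda>x\<in>Q. m (g x) a) y)) = (h x = h y)"
        using xy gx a IH by (simp add: hm rc hQ)
    qed
  qed
qed

end

theorem lemma4p2:
  fixes Q :: "'a set" and m :: "'a \<Rightarrow> 'a \<Rightarrow> 'a" and e :: 'a
    and Q' :: "'b set" and m' :: "'b \<Rightarrow> 'b \<Rightarrow> 'b" and e' :: 'b
    and h :: "'a \<Rightarrow> 'b" and X :: "'a set"
  assumes "moufang_loop Q m e"
    and "loop Q' m' e'" and "loop_hom Q m Q' m' h" and "X = hom_kernel Q h e'"
    and "commutative_group_on X m"
    and "two_divisible X m"
  shows "\<forall>f \<in> inner_mapping_group Q m e. automorphism_on X m f"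
proof
  interpret mloop Q m e by (rule mloop.intro) (rule assms(1))
  fix f assume "f \<in> inner_mapping_group Q m e"
  hence f: "f \<in> mult_group Q m" and fe: "f e = e" unfolding inner_mapping_group_def by auto
  have fQ: "\<And>x. x \<in> Q \<Longrightarrow> f x \<in> Q" using mg_bij[OF f] bij_betwE by blast
  have hQ: "\<And>x. x \<in> Q \<Longrightarrow> h x \<in> Q'" using assms(3) unfolding loop_hom_def by blast
  have hm: "\<And>x y. x \<in> Q \<Longrightarrow> y \<in> Q \<Longrightarrow> h (m x y) = m' (h x) (h y)"
    using assms(3) unfolding loop_hom_def by blast
  have lcQ': "\<And>a u v. a \<in> Q' \<Longrightarrow> u \<in> Q' \<Longrightarrow> v \<in> Q' \<Longrightarrow> m' a u = m' a v \<Longrightarrow> u = v"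
    using assms(2) unfolding loop_def bij_betw_def inj_on_def by blast
  have ridQ': "\<And>u. u \<in> Q' \<Longrightarrow> m' u e' = u" using assms(2) unfolding loop_def by blast
  have e'Q: "e' \<in> Q'" using assms(2) unfolding loop_def by blast
  have heQ: "h e \<in> Q'" using hQ by simp
  have "m' (h e) (h e) = m' (h e) e'"
    using hm[of e e] ridQ'[OF heQ] by simp
  hence he: "h e = e'" using lcQ'[OF heQ heQ e'Q] by blast
  have Xc: "\<And>x. x \<in> X \<longleftrightarrow> x \<in> Q \<and> h x = h e" using assms(4) he unfolding hom_kernel_def by auto
  have fX: "\<And>x. x \<in> Q \<Longrightarrow> f x \<in> X \<longleftrightarrow> x \<in> X"
  proof -
    fix x assume x: "x \<in> Q"
    have "(h (f x) = h (f e)) = (h x = h e)" using mg_hom[OF f assms(2,3)] x by simp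
    thus "f x \<in> X \<longleftrightarrow> x \<in> X" using fe Xc fQ[OF x] x by simp
  qed
  have XQ: "X \<subseteq> Q" using Xc by auto
  have bijX: "bij_betw f X X"
  proof -
    have inj: "inj_on f X" using mg_bij[OF f] XQ unfolding bij_betw_def by (meson inj_on_subset)
    have "f ` X = X"
    proof
      show "f ` X \<subseteq> X" using fX XQ by auto
      show "X \<subseteq> f ` X"
      proof
        fix x assume x: "x \<in> X"
        then obtain z where z: "z \<in> Q" "x = f z" using mg_bij[OF f] XQ unfolding bij_betw_def by blast
        hence "z \<in> X" using fX x by auto
        thus "x \<in> f ` X" using z by auto
      qed
    qed
    thus ?thesis using inj unfolding bij_betw_def by blast
  qed
  obtain \<beta> \<gamma> where b: "\<forall>y\<in>Q. \<beta> y \<in> Q" and bg: "\<forall>x\<in>Q. \<forall>y\<in>Q. m (f x) (\<beta> y) = \<gamma> (m x y)"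
    using mg_atp[OF f] by blast
  define c where "c = \<beta> e"
  have c: "c \<in> Q" using b c_def by simp
  have bga: "\<And>y. y \<in> Q \<Longrightarrow> \<beta> y = \<gamma> y" proof -
    fix y assume y: "y \<in> Q"
    have "m (f e) (\<beta> y) = \<gamma> (m e y)" using bg y by simp
    thus "\<beta> y = \<gamma> y" using fe y b by simp
  qed
  have bf: "\<And>x. x \<in> Q \<Longrightarrow> \<beta> x = m (f x) c" proof -
    fix x assume x: "x \<in> Q"
    have "m (f x) (\<beta> e) = \<gamma> (m x e)" using bg x by simp
    thus "\<beta> x = m (f x) c" using bga x c_def by simp
  qed
  have pseudo: "\<And>x y. x \<in> Q \<Longrightarrow> y \<in> Q \<Longrightarrow> m (f x) (m (f y) c) = m (f (m x y)) c"
  proof -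
    fix x y assume xy: "x \<in> Q" "y \<in> Q"
    have "m (f x) (m (f y) c) = m (f x) (\<beta> y)" using bf xy by simp
    also have "\<dots> = \<gamma> (m x y)" using bg xy by simp
    also have "\<dots> = \<beta> (m x y)" using bga xy by simp
    also have "\<dots> = m (f (m x y)) c" using bf xy by simp
    finally show "m (f x) (m (f y) c) = m (f (m x y)) c" .
  qed
  have semi: "\<And>y t. y \<in> Q \<Longrightarrow> t \<in> Q \<Longrightarrow> f (m y (m t y)) = m (m (f y) (f t)) (f y)"
  proof -
    fix y t assume yt: "y \<in> Q" "t \<in> Q"
    have "m (f (m y (m t y))) c = m (f y) (m (f (m t y)) c)" using pseudo yt by simp
    also have "\<dots> = m (f y) (m (f t) (m (f y) c))" using pseudo yt by simp
    also have "\<dots> = m (m (m (f y) (f t)) (f y)) c" using lmouf[of "f y" "f t" c] fQ yt c by simp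
    finally show "f (m y (m t y)) = m (m (f y) (f t)) (f y)"
      using rcancel[of c] c fQ yt by simp
  qed
  have cl: "\<And>x y. x \<in> X \<Longrightarrow> y \<in> X \<Longrightarrow> m x y \<in> X"
    and as: "\<And>x y z. x \<in> X \<Longrightarrow> y \<in> X \<Longrightarrow> z \<in> X \<Longrightarrow> m (m x y) z = m x (m y z)"
    and cm: "\<And>x y. x \<in> X \<Longrightarrow> y \<in> X \<Longrightarrow> m x y = m y x"
    using assms(5) unfolding commutative_group_on_def by blast+
  have eX: "e \<in> X" using Xc by simp
  have hom: "\<forall>x\<in>X. \<forall>y\<in>X. f (m x y) = m (f x) (f y)"
  proof (intro ballI)
    fix a t assume a: "a \<in> X" and t: "t \<in> X"
    obtain y where y: "y \<in> X" "m y y = a" using assms(6) a unfolding two_divisible_def by blast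
    have fy: "f y \<in> X" and ft: "f t \<in> X" using fX y t XQ by auto
    have "m a t = m y (m t y)"
    proof -
      have "m a t = m (m y y) t" using y by simp
      also have "\<dots> = m y (m y t)" using as y t by blast
      also have "m y t = m t y" using cm y t by blast
      finally show ?thesis .
    qed
    have yQ: "y \<in> Q" and tQ: "t \<in> Q" using y t XQ by auto
    have fyQ: "f y \<in> Q" using fQ yQ by simp
    from \<open>m a t = _\<close> have 1: "f (m a t) = m (m (f y) (f t)) (f y)" using semi yQ tQ by simp
    have "f a = f (m y (m e y))" using y yQ by simp
    also have "\<dots> = m (f y) (f y)" using semi[of y e] fe yQ fyQ by simp
    finally have "f a = m (f y) (f y)" .
    have "m (m (f y) (f t)) (f y) = m (f y) (m (f t) (f y))" using as fy ft by blast
    also have "m (f t) (f y) = m (f y) (f t)" using cm fy ft by blast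
    also have "m (f y) (m (f y) (f t)) = m (m (f y) (f y)) (f t)" using as[of "f y" "f y" "f t"] fy ft by simp
    finally show "f (m a t) = m (f a) (f t)" using 1 \<open>f a = m (f y) (f y)\<close> by simp
  qed
  show "automorphism_on X m f" unfolding automorphism_on_def using bijX hom by blast
qed

end
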